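(* Let $y(t)=e^{i\theta(t)}\in C$ be the solution of the spherical mean curvature flow $y'(t)=H^S(y(t))$ with $y(0)=e^{i\theta_0}$, $0<\theta_0<\pi/g$. Then, on its interval of existence, $$\cos g\theta(t)=e^{gnt}\{\cos g\theta_0+\delta\}-\delta.$$
   Context: Let $M^n$ be a compact isoparametric hypersurface in the unit sphere $S^{n+1}\subset\mathbb{R}^{n+2}$ (constant principal curvatures) with $g$ distinct principal curvatures; then $g\in\{1,2,3,4,6\}$. Fix $x_0\in M$ and identify the 2-dimensional normal space $\nu_{x_0}M$ of $M$ in $\mathbb{R}^{n+2}$ with $\mathbb{C}$ so that the two focal submanifolds $M_+$, $M_-$ ($\dim M_+\le\dim M_-$) meet the normal circle at $1$ and $e^{i\pi/g}$. The Weyl chamber is $C=\{re^{i\theta}:r>0,\ 0<\theta<\pi/g\}$. The multiplicity data is $(m_1,m_2)$, $m_1\le m_2$, with $m_1=m_2$ if $g$ is odd and $(m_1+m_2)g=2n$. For $x\in C$, $M_x$ is the submanifold of $\mathbb{R}^{n+2}$ parallel to $M$ through $x$, and $H^S(x)$ is its mean curvature vector at $x$ as a hypersurface of $S^{n+1}(|x|)$, which equals $-\frac{n}{r}ie^{i\theta}\{\cot g\theta+\delta\csc g\theta\}$ for $x=re^{i\theta}$. The spherical MCF of $M_{y(0)}$ is the family $M_{y(t)}$. Set $\delta=(m_2-m_1)/(m_2+m_1)$ if $g\ge2$ and $\delta=0$ if $g=1$. *)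

theory Defs
  imports "HOL-Analysis.Analysis"
begin

text \<open>Multiplicity data of an isoparametric hypersurface with g distinct principal
curvatures: g in {1,2,3,4,6}, 0 < m1 <= m2, m1 = m2 if g is odd, (m1+m2) g = 2 n.\<close>
definition iso_data :: "nat \<Rightarrow> nat \<Rightarrow> nat \<Rightarrow> nat \<Rightarrow> bool" where
  "iso_data g m1 m2 n \<longleftrightarrow> g \<in> {1,2,3,4,6} \<and> 0 < m1 \<and> m1 \<le> m2
     \<and> (odd g \<longrightarrow> m1 = m2) \<and> (m1 + m2) * g = 2 * n"

definition iso_delta :: "nat \<Rightarrow> nat \<Rightarrow> nat \<Rightarrow> real" where
  "iso_delta g m1 m2 = (if g \<ge> 2 then (real m2 - real m1) / (real m2 + real m1) else 0)"

definition weyl_chamber :: "nat \<Rightarrow> complex set" where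
  "weyl_chamber g = {x. x \<noteq> 0 \<and> 0 < Arg x \<and> Arg x < pi / real g}"

definition HS :: "nat \<Rightarrow> nat \<Rightarrow> real \<Rightarrow> complex \<Rightarrow> complex" where
  "HS g n \<delta> x = (let r = cmod x; \<theta> = Arg x in
     - complex_of_real (real n / r) * \<i> * cis \<theta>
       * complex_of_real (cot (real g * \<theta>) + \<delta> / sin (real g * \<theta>)))"

end

theory Submission
  imports Defs
begin

lemma vd_power:
  fixes y :: "real \<Rightarrow> complex"
  assumes "(y has_vector_derivative v) (at t within S)"
  shows "((\<lambda>t. y t ^ k) has_vector_derivative (of_nat k * v * y t ^ (k - 1))) (at t within S)"
proof -
  have "(y has_derivative (\<lambda>h. h *\<^sub>R v)) (at t within S)"
    using assms by (simp add: has_vector_derivative_def)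
  from has_derivative_power[OF this, of k]
  show ?thesis unfolding has_vector_derivative_def
    by (rule has_derivative_eq_rhs) (auto simp: scaleR_conv_of_real fun_eq_iff)
qed

lemma key_deriv:
  fixes y :: complex and g n :: nat and \<delta> :: real
  assumes "y = cis a" "0 < a" "a < pi / real g" "g > 0"
  shows "Re (of_nat g * HS g n \<delta> y * y ^ (g - 1)) = real g * real n * (Re (y ^ g) + \<delta>)"
proof -
  have cm: "cmod y = 1" using assms by simp
  have y0: "y \<noteq> 0" using cm by auto
  have "Arg y = a"
  proof -
    have "a \<le> pi"
    proof -
      have "pi / real g \<le> pi" using assms(4) by (simp add: divide_le_eq)
      thus ?thesis using assms by simp
    qed
    thus ?thesis using assms by (intro cis_Arg_unique) auto
  qed
  hence HSe: "HS g n \<delta> y = - complex_of_real (real n) * \<i> * y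
      * complex_of_real (cot (real g * a) + \<delta> / sin (real g * a))"
    unfolding HS_def Let_def cm using assms(1) by simp
  have ga: "0 < real g * a" "real g * a < pi"
    using assms by (auto simp: field_simps)
  have s: "sin (real g * a) > 0" using sin_gt_zero[OF ga] .
  have yg1: "y * y ^ (g - 1) = y ^ g" using assms(4) by (cases g) auto
  have yg: "y * y ^ (g - 1) = cis (real g * a)"
    by (simp only: yg1) (simp only: assms(1) Complex.DeMoivre)
  have "of_nat g * HS g n \<delta> y * y ^ (g - 1) = - complex_of_real (real g * real n) * \<i> * (y * y ^ (g - 1))
      * complex_of_real (cot (real g * a) + \<delta> / sin (real g * a))"
    unfolding HSe by (simp add: algebra_simps)
  also have "Re \<dots> = real g * real n * sin (real g * a) * (cot (real g * a) + \<delta> / sin (real g * a))"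
    unfolding yg by (simp add: cis.ctr)
  also have "\<dots> = real g * real n * (cos (real g * a) + \<delta>)"
    using s by (simp add: cot_def field_simps)
  also have "cos (real g * a) = Re (y ^ g)" unfolding assms(1) Complex.DeMoivre by simp
  finally show ?thesis .
qed

theorem proposition4p3:
  fixes g m1 m2 n :: nat and I :: "real set" and y :: "real \<Rightarrow> complex"
    and \<theta> :: "real \<Rightarrow> real" and \<theta>0 :: real
  assumes data: "iso_data g m1 m2 n"
    and I: "is_interval I" "0 \<in> I"
    and flow: "\<forall>t\<in>I. (y has_vector_derivative HS g n (iso_delta g m1 m2) (y t)) (at t within I)"
    and polar: "\<forall>t\<in>I. y t = cis (\<theta> t) \<and> y t \<in> weyl_chamber g"
    and init: "y 0 = cis \<theta>0" "0 < \<theta>0" "\<theta>0 < pi / real g"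
  shows "\<forall>t\<in>I.
     cos (real g * \<theta> t) = exp (real g * real n * t) * (cos (real g * \<theta>0) + iso_delta g m1 m2)
                            - iso_delta g m1 m2"
proof -
  define \<delta> where "\<delta> = iso_delta g m1 m2"
  define c where "c = real g * real n"
  have gpos: "g > 0" using data by (auto simp: iso_data_def)
  define u where "u t = Re (y t ^ g)" for t
  have ucos: "u t = cos (real g * \<theta> t)" if "t \<in> I" for t
  proof -
    have "y t = cis (\<theta> t)" using polar that by auto
    thus ?thesis unfolding u_def by (simp only: Complex.DeMoivre) simp
  qed
  have yA: "y t = cis (Arg (y t))" "0 < Arg (y t)" "Arg (y t) < pi / real g" if "t \<in> I" for t
  proof -
    have yin: "y t \<in> weyl_chamber g" and yc: "y t = cis (\<theta> t)" using polar that by auto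
    hence "y t \<noteq> 0" by (auto simp: weyl_chamber_def)
    moreover have "cmod (y t) = 1" using yc by simp
    ultimately show "y t = cis (Arg (y t))" by (simp add: cis_Arg sgn_div_norm)
    show "0 < Arg (y t)" "Arg (y t) < pi / real g" using yin by (auto simp: weyl_chamber_def)
  qed
  have uder: "(u has_field_derivative c * (u t + \<delta>)) (at t within I)" if "t \<in> I" for t
  proof -
    have "((\<lambda>t. y t ^ g) has_vector_derivative (of_nat g * HS g n \<delta> (y t) * y t ^ (g - 1))) (at t within I)"
      using flow that vd_power unfolding \<delta>_def by blast
    from has_field_derivative_Re[OF this]
    show ?thesis unfolding u_def c_def
      using key_deriv[OF yA(1)[OF that] yA(2)[OF that] yA(3)[OF that] gpos, of n \<delta>]
      yA(1)[OF that] by simp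
  qed
  define h where "h t = exp (- c * t) * (u t + \<delta>)" for t
  have "\<exists>k. \<forall>t\<in>I. h t = k"
  proof (rule has_field_derivative_zero_constant)
    show "convex I" using I(1) by (simp add: is_interval_convex)
    fix t assume t: "t \<in> I"
    have "(h has_field_derivative (exp (- c * t) * (- c) * (u t + \<delta>) + exp (- c * t) * (c * (u t + \<delta>)))) (at t within I)"
    proof -
      have e: "((\<lambda>t. exp (- c * t)) has_field_derivative exp (- c * t) * (- c)) (at t within I)"
        using DERIV_chain2[OF DERIV_exp, of "\<lambda>t. - c * t" "- c" t I]
          DERIV_cmult[OF DERIV_ident, of "- c" t I] by simp
      have v: "((\<lambda>t. u t + \<delta>) has_field_derivative c * (u t + \<delta>) + 0) (at t within I)"
        by (rule DERIV_add[OF uder[OF t] DERIV_const])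
      show ?thesis unfolding h_def using DERIV_mult[OF e v] by simp
    qed
    thus "(h has_field_derivative 0) (at t within I)" by (simp add: algebra_simps)
  qed
  then obtain k where k: "\<forall>t\<in>I. h t = k" by blast
  have u0: "u 0 = cos (real g * \<theta>0)" unfolding u_def init(1) Complex.DeMoivre by simp
  have hk: "k = u 0 + \<delta>" using bspec[OF k I(2)] by (simp add: h_def)
  show ?thesis
  proof
    fix t assume t: "t \<in> I"
    have "exp (- c * t) * (u t + \<delta>) = u 0 + \<delta>" using k t hk by (simp add: h_def)
    hence "u t + \<delta> = exp (c * t) * (u 0 + \<delta>)"
      by (metis exp_minus_inverse mult.assoc mult.commute mult_minus_left mult_1)
    thus "cos (real g * \<theta> t) = exp (real g * real n * t) * (cos (real g * \<theta>0) + iso_delta g m1 m2) - iso_delta g m1 m2"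
      using ucos[OF t] u0 by (simp add: c_def \<delta>_def)
  qed
qed

end
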